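(* Let $N\ge 1$, let $p$ range over a set of parameters in $\mathbb{R}^m$, and let $\varepsilon>0$ be a distinguished parameter. Consider the first-order linear system $$W'=A^p(x;\varepsilon)W:=M^p(x;\varepsilon)W+\Theta^p(x;\varepsilon)W,\qquad x\le 0,\quad W\in\mathbb{C}^N,$$ where $'=d/dx$ and $M^p,\Theta^p$ are $N\times N$ complex matrix-valued functions of $x$, satisfying, for some constants $C,\theta>0$ independent of $p$, $\varepsilon$ and $x$, and some scalars $\delta^p(\varepsilon)\ge 0$, $$|\Theta^p(x;\varepsilon)|\le C\varepsilon^2 e^{-\theta\varepsilon|x|},\qquad |\operatorname{Re} M^p(x;\varepsilon)|\le \varepsilon\,\delta^p(\varepsilon)+C\varepsilon e^{-\theta\varepsilon|x|}\quad\text{for all } x\le 0,$$ where $\operatorname{Re}M:=\tfrac12(M+M^* )$. Then there exists $\delta_*>0$ such that, whenever $\delta^p(\varepsilon)\le\delta_*$ and $\varepsilon>0$ is sufficiently small, there exists an invertible linear transformation $P^p(x,\varepsilon)=I+\Psi^p(x,\varepsilon)$ defined on $x\le 0$ with $$|\Psi^p(x,\varepsilon)|\le C_1\varepsilon e^{-\theta\varepsilon|x|/2}\quad\text{for } x\le 0$$ (for some constant $C_1>0$), such that the change of coordinates $W=P^pZ$ reduces $W'=A^pW$ to $Z'=M^pZ$.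
   Context: $M^*$ denotes the conjugate transpose of $M$, and $|\cdot|$ a matrix norm. *)

theory Defs
  imports "HOL-Analysis.Analysis"
begin

definition adjoint_mat :: "complex^'n^'n \<Rightarrow> complex^'n^'n" where
  "adjoint_mat M = (\<chi> i j. cnj (M $ j $ i))"

definition Re_mat :: "complex^'n^'n \<Rightarrow> complex^'n^'n" where
  "Re_mat M = (1/2::real) *\<^sub>R (M + adjoint_mat M)"

end

theory Submission
  imports Defs
begin



lemma normsq_mat: "norm (x::complex^'n^'n) ^ 2 = (\<Sum>i\<in>UNIV. \<Sum>j\<in>UNIV. (cmod (x$i$j))^2)"
  by (simp add: norm_vec_def L2_set_def sum_nonneg)

lemma norm_mat_mult: "norm ((A::complex^'n^'n) ** (B::complex^'n^'n)) \<le> norm A * norm B"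
proof -
  have e: "(cmod ((A ** B)$i$j))^2 \<le> (\<Sum>k\<in>UNIV. (cmod (A$i$k))^2) * (\<Sum>k\<in>UNIV. (cmod (B$k$j))^2)" for i j
  proof -
    have "cmod ((A ** B)$i$j) \<le> (\<Sum>k\<in>UNIV. cmod (A$i$k) * cmod (B$k$j))"
      unfolding matrix_matrix_mult_def by (simp add: norm_sum norm_mult order_trans[OF norm_sum])
    then have "(cmod ((A ** B)$i$j))^2 \<le> (\<Sum>k\<in>UNIV. cmod (A$i$k) * cmod (B$k$j))^2"
      by (simp add: power_mono)
    also have "\<dots> \<le> (\<Sum>k\<in>UNIV. (cmod (A$i$k))^2) * (\<Sum>k\<in>UNIV. (cmod (B$k$j))^2)"
      by (rule Cauchy_Schwarz_ineq_sum)
    finally show ?thesis .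
  qed
  have "norm (A ** B) ^ 2 \<le> (\<Sum>i\<in>UNIV. \<Sum>j\<in>UNIV. (\<Sum>k\<in>UNIV. (cmod (A$i$k))^2) * (\<Sum>k\<in>UNIV. (cmod (B$k$j))^2))"
    unfolding normsq_mat by (intro sum_mono e)
  also have "\<dots> = (\<Sum>i\<in>UNIV. (\<Sum>k\<in>UNIV. (cmod (A$i$k))^2)) * (\<Sum>j\<in>UNIV. (\<Sum>k\<in>UNIV. (cmod (B$k$j))^2))"
    by (rule sum_product[symmetric])
  also have "\<dots> = (norm A * norm B)^2"
  proof -
    have "(norm B)^2 = (\<Sum>j\<in>UNIV. (\<Sum>k\<in>UNIV. (cmod (B$k$j))^2))"
      unfolding normsq_mat by (rule sum.swap)
    then show ?thesis by (simp add: normsq_mat power_mult_distrib)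
  qed
  finally show ?thesis
    by (meson mult_nonneg_nonneg norm_ge_zero power2_le_imp_le)
qed


lemma Re_cnj_sym: "Re z = Re (cnj z)" by simp

lemma inner_mat: "inner (X::complex^'n^'n) Y = (\<Sum>i\<in>UNIV. \<Sum>j\<in>UNIV. Re (cnj (X$i$j) * Y$i$j))"
  by (simp add: inner_vec_def inner_complex_def)

lemma sum_swap3: "(\<Sum>i\<in>A. \<Sum>j\<in>B. \<Sum>k\<in>C. f i j k) = (\<Sum>k\<in>C. \<Sum>j\<in>B. \<Sum>i\<in>A. f i j k)"
proof -
  have "(\<Sum>i\<in>A. \<Sum>j\<in>B. \<Sum>k\<in>C. f i j k) = (\<Sum>i\<in>A. \<Sum>k\<in>C. \<Sum>j\<in>B. f i j k)"
    by (rule sum.cong[OF refl], rule sum.swap)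
  also have "\<dots> = (\<Sum>k\<in>C. \<Sum>i\<in>A. \<Sum>j\<in>B. f i j k)" by (rule sum.swap)
  also have "\<dots> = (\<Sum>k\<in>C. \<Sum>j\<in>B. \<Sum>i\<in>A. f i j k)"
    by (rule sum.cong[OF refl], rule sum.swap)
  finally show ?thesis .
qed

lemma inner_adj_left: "inner (X::complex^'n^'n) (adjoint_mat M ** X) = inner X (M ** X)"
proof -
  have "inner X (adjoint_mat M ** X) = (\<Sum>i\<in>UNIV. \<Sum>j\<in>UNIV. \<Sum>k\<in>UNIV. Re (cnj (X$i$j) * (cnj (M$k$i) * X$k$j)))"
    by (simp add: inner_mat adjoint_mat_def matrix_matrix_mult_def sum_distrib_left)
  also have "\<dots> = (\<Sum>k\<in>UNIV. \<Sum>j\<in>UNIV. \<Sum>i\<in>UNIV. Re (cnj (X$i$j) * (cnj (M$k$i) * X$k$j)))"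
    by (rule sum_swap3)
  also have "\<dots> = (\<Sum>k\<in>UNIV. \<Sum>j\<in>UNIV. \<Sum>i\<in>UNIV. Re (cnj (X$k$j) * (M$k$i * X$i$j)))"
    by (intro sum.cong refl) (subst Re_cnj_sym, simp add: mult.commute mult.left_commute)
  also have "\<dots> = inner X (M ** X)"
    by (simp add: inner_mat matrix_matrix_mult_def sum_distrib_left)
  finally show ?thesis .
qed

lemma inner_adj_right: "inner (X::complex^'n^'n) (X ** adjoint_mat M) = inner X (X ** M)"
proof -
  have "inner X (X ** adjoint_mat M) = (\<Sum>i\<in>UNIV. \<Sum>j\<in>UNIV. \<Sum>k\<in>UNIV. Re (cnj (X$i$j) * X$i$k * cnj (M$j$k)))"
    by (simp add: inner_mat adjoint_mat_def matrix_matrix_mult_def sum_distrib_left Re_sum mult.assoc)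
  also have "\<dots> = (\<Sum>i\<in>UNIV. \<Sum>k\<in>UNIV. \<Sum>j\<in>UNIV. Re (cnj (X$i$j) * X$i$k * cnj (M$j$k)))"
    by (rule sum.cong[OF refl], rule sum.swap)
  also have "\<dots> = (\<Sum>i\<in>UNIV. \<Sum>k\<in>UNIV. \<Sum>j\<in>UNIV. Re (cnj (X$i$k) * X$i$j * M$j$k))"
    by (intro sum.cong refl) (subst Re_cnj_sym, simp add: mult.commute mult.left_commute)
  also have "\<dots> = inner X (X ** M)"
    by (simp add: inner_mat matrix_matrix_mult_def sum_distrib_left Re_sum mult.assoc)
  finally show ?thesis .
qed




lemma at_within_le0:
  fixes x :: real
  assumes "-real n < x" "x \<le> 0"
  shows "at x within {..0} = at x within {-real n..0}"
  by (rule at_within_nhd[of x "{-real n<..}"]) (use assms in auto)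

lemma cont_glue:
  fixes f :: "real \<Rightarrow> 'a::topological_space"
  assumes "\<And>n::nat. continuous_on {-real n..0} f"
  shows "continuous_on {..0} f"
  unfolding continuous_on_eq_continuous_within
proof
  fix x :: real assume x: "x \<in> {..0}"
  obtain n::nat where n: "-x < real n" using reals_Archimedean2 by blast
  have "continuous (at x within {-real n..0}) f"
    using assms[of n] x n by (simp add: continuous_on_eq_continuous_within)
  then show "continuous (at x within {..0}) f"
    using at_within_le0[of n x] n x by simp
qed

lemma integral_exp_neg:
  fixes L a b :: real
  assumes "a \<le> b" "L > 0"
  shows "integral {a..b} (\<lambda>t. exp (-(2*L)*t)) = (exp (-(2*L)*a) - exp (-(2*L)*b)) / (2*L)"
proof -
  have "((\<lambda>t. exp (-(2*L)*t)) has_integral ((\<lambda>t. - exp (-(2*L)*t) / (2*L)) b - (\<lambda>t. - exp (-(2*L)*t) / (2*L)) a)) {a..b}"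
    apply (rule fundamental_theorem_of_calculus[OF assms(1)])
    apply (rule has_real_derivative_iff_has_vector_derivative[THEN iffD1])
    apply (rule DERIV_subset[where s=UNIV])
     using assms(2) apply (auto intro!: derivative_eq_intros simp: field_simps)
    done
  then have "integral {a..b} (\<lambda>t. exp (-(2*L)*t)) = - exp (-(2*L)*b) / (2*L) - (- exp (-(2*L)*a) / (2*L))"
    by (rule integral_unique)
  then show ?thesis by (simp add: diff_divide_distrib)
qed

lemma lin_ode_exists:
  fixes prod :: "'b::real_normed_vector \<Rightarrow> 'a::banach \<Rightarrow> 'a" and F :: "real \<Rightarrow> 'b" and X0 :: 'a
  assumes bb: "bounded_bilinear prod"
    and Fc: "continuous_on {..0} F"
  shows "\<exists>X. X 0 = X0 \<and> continuous_on {..0} X \<and>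
           (\<forall>x\<le>0. (X has_vector_derivative prod (F x) (X x)) (at x within {..0}))"
proof -
  interpret bb: bounded_bilinear prod by (rule bb)
  obtain K where K: "K > 0" "\<And>a b. norm (prod a b) \<le> norm a * norm b * K"
    using bb.pos_bounded by blast
  have contP: "continuous_on S (\<lambda>t. prod (F t) (Z t))" if "continuous_on S Z" "S \<subseteq> {..0}" for S Z
    by (rule bb.continuous_on[OF continuous_on_subset[OF Fc that(2)] that(1)])
  have intcont: "continuous_on {..0} (\<lambda>x. integral {x..0} h)" if "continuous_on {..0} h" for h :: "real \<Rightarrow> 'a"
  proof (rule cont_glue)
    fix n :: nat
    have "h integrable_on {-real n..0}"
      by (rule integrable_continuous_real, rule continuous_on_subset[OF that]) auto
    then show "continuous_on {-real n..0} (\<lambda>x. integral {x..0} h)"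
      by (rule indefinite_integral_continuous_1')
  qed
  have intg: "(\<lambda>t. prod (F t) (Z t)) integrable_on {x..0}" if "continuous_on {..0} Z" for Z x
    by (rule integrable_continuous_real, rule contP, rule continuous_on_subset[OF that]) auto
  define g where "g Z = (\<lambda>x. X0 - integral {x..0} (\<lambda>t. prod (F t) (Z t)))" for Z :: "real \<Rightarrow> 'a"
  define Y where "Y k = (g ^^ k) (\<lambda>_. X0)" for k
  have Y0: "Y 0 = (\<lambda>_. X0)" and YS: "Y (Suc k) = g (Y k)" for k by (simp_all add: Y_def)
  have Ycont: "continuous_on {..0} (Y k)" for k
  proof (induction k)
    case 0 show ?case by (simp add: Y0)
  next
    case (Suc k)
    show ?case unfolding YS g_def
      by (intro continuous_on_diff continuous_on_const intcont contP Suc.IH) auto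
  qed
  define D where "D k x = Y (Suc k) x - Y k x" for k x
  have D0: "D 0 x = - integral {x..0} (\<lambda>t. prod (F t) X0)" for x
    by (simp add: D_def YS Y0 g_def)
  have DS: "D (Suc k) x = - integral {x..0} (\<lambda>t. prod (F t) (D k t))" for k x
  proof -
    have a: "Y (Suc (Suc k)) x = X0 - integral {x..0} (\<lambda>t. prod (F t) (Y (Suc k) t))"
      by (simp only: YS[of "Suc k"] g_def)
    have b: "Y (Suc k) x = X0 - integral {x..0} (\<lambda>t. prod (F t) (Y k t))"
      by (simp only: YS[of k] g_def)
    have "D (Suc k) x = - (integral {x..0} (\<lambda>t. prod (F t) (Y (Suc k) t)) - integral {x..0} (\<lambda>t. prod (F t) (Y k t)))"
      unfolding D_def a b by simp
    also have "\<dots> = - integral {x..0} (\<lambda>t. prod (F t) (Y (Suc k) t) - prod (F t) (Y k t))"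
      by (subst integral_diff[OF intg[OF Ycont] intg[OF Ycont]]) simp
    also have "\<dots> = - integral {x..0} (\<lambda>t. prod (F t) (D k t))"
      by (simp add: D_def bb.diff_right)
    finally show ?thesis .
  qed
  have Dcont: "continuous_on {..0} (D k)" for k
    unfolding D_def by (intro continuous_on_diff Ycont)
  have local: "\<exists>L>0. \<forall>t\<in>{-real n..0}. \<forall>v. norm (prod (F t) v) \<le> L * norm v" for n :: nat
  proof -
    have "continuous_on {-real n..0} F" by (rule continuous_on_subset[OF Fc]) auto
    then have "bounded (F ` {-real n..0})"
      by (intro compact_imp_bounded compact_continuous_image) auto
    then obtain B where B0: "\<forall>t\<in>{-real n..0}. norm (F t) \<le> B"
      unfolding bounded_iff by auto
    have B: "norm (F t) \<le> B" if "t \<in> {-real n..0}" for t using B0 that by blast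
    have "norm (prod (F t) v) \<le> (K * (\<bar>B\<bar> + 1)) * norm v" if "t \<in> {-real n..0}" for t v
    proof -
      have "norm (prod (F t) v) \<le> norm (F t) * norm v * K" by (rule K(2))
      also have "\<dots> \<le> (\<bar>B\<bar> + 1) * norm v * K"
        using B[OF that] K(1) by (intro mult_right_mono mult_right_mono) auto
      finally show ?thesis by (simp add: algebra_simps)
    qed
    moreover have "K * (\<bar>B\<bar> + 1) > 0" using K(1) by (simp add: add_pos_nonneg)
    ultimately show ?thesis by blast
  qed
  have Dbound: "norm (D k x) \<le> norm X0 * (1/2)^k * exp (-(2*L)*x)"
    if L: "L > 0" "\<forall>t\<in>{-real n..0}. \<forall>v. norm (prod (F t) v) \<le> L * norm v"
      and x: "x \<in> {-real n..0}" for L n k x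
    using x
  proof (induction k arbitrary: x)
    case 0
    have "norm (D 0 x) = norm (integral {x..0} (\<lambda>t. prod (F t) X0))" by (simp add: D0)
    also have "\<dots> \<le> integral {x..0} (\<lambda>t. L * norm X0)"
      by (rule integral_norm_bound_integral)
         (use 0 L in \<open>auto intro!: intg simp: \<close>)
    also have "\<dots> = L * norm X0 * (- x)" using 0 by simp
    also have "\<dots> \<le> norm X0 * exp (-(2*L)*x)"
    proof -
      have "L * x \<le> 0" using L(1) 0 by (simp add: mult_nonneg_nonpos)
      then have "L * (-x) \<le> 1 + (-(2*L)*x)" by (simp add: algebra_simps)
      also have "\<dots> \<le> exp (-(2*L)*x)" by (rule exp_ge_add_one_self)
      finally show ?thesis by (metis mult.commute mult.left_commute mult_left_mono norm_ge_zero)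
    qed
    finally show ?case by simp
  next
    case (Suc k)
    have "norm (D (Suc k) x) = norm (integral {x..0} (\<lambda>t. prod (F t) (D k t)))" by (simp add: DS)
    also have "\<dots> \<le> integral {x..0} (\<lambda>t. L * (norm X0 * (1/2)^k) * exp (-(2*L)*t))"
    proof (rule integral_norm_bound_integral)
      show "(\<lambda>t. prod (F t) (D k t)) integrable_on {x..0}" by (rule intg[OF Dcont])
      show "(\<lambda>t. L * (norm X0 * (1/2)^k) * exp (-(2*L)*t)) integrable_on {x..0}"
        by (intro integrable_continuous_real continuous_intros)
      fix t assume t: "t \<in> {x..0}"
      then have tn: "t \<in> {-real n..0}" using Suc.prems by auto
      have "norm (prod (F t) (D k t)) \<le> L * norm (D k t)" using L tn by blast
      also have "\<dots> \<le> L * (norm X0 * (1/2)^k * exp (-(2*L)*t))"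
        using Suc.IH[OF tn] L by (intro mult_left_mono) auto
      finally show "norm (prod (F t) (D k t)) \<le> L * (norm X0 * (1/2)^k) * exp (-(2*L)*t)"
        by (simp add: mult.assoc)
    qed
    also have "\<dots> = L * (norm X0 * (1/2)^k) * ((exp (-(2*L)*x) - exp (-(2*L)*0)) / (2*L))"
    proof -
      have ie: "integral {x..0} (\<lambda>t. exp (-(2*L)*t)) = (exp (-(2*L)*x) - exp (-(2*L)*0)) / (2*L)"
        using Suc.prems L by (intro integral_exp_neg) auto
      have "(\<lambda>t. exp (-(2*L)*t)) integrable_on {x..0}"
        by (intro integrable_continuous_real continuous_intros)
      then show ?thesis using integral_mult[of "\<lambda>t. exp (-(2*L)*t)" "{x..0}" "L * (norm X0 * (1/2)^k)"]
        by (simp only: ie)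
    qed
    also have "\<dots> = norm X0 * (1/2)^(Suc k) * (exp (-(2*L)*x) - 1)"
      using L by (simp add: field_simps)
    also have "\<dots> \<le> norm X0 * (1/2)^(Suc k) * exp (-(2*L)*x)"
      by (intro mult_left_mono) auto
    finally show ?case .
  qed
  define X where "X x = X0 + (\<Sum>k. D k x)" for x
  have Ysum: "Y k x = X0 + (\<Sum>i<k. D i x)" for k x
    by (induction k) (simp_all add: Y0 D_def)
  have Ylim: "uniform_limit {-real n..0} Y X sequentially" for n :: nat
  proof -
    obtain L where L: "L > 0" "\<forall>t\<in>{-real n..0}. \<forall>v. norm (prod (F t) v) \<le> L * norm v"
      using local by blast
    have "uniform_limit {-real n..0} (\<lambda>k x. \<Sum>i<k. D i x) (\<lambda>x. \<Sum>i. D i x) sequentially"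
    proof (rule Weierstrass_m_test)
      fix k x assume x: "x \<in> {-real n..0}"
      have "norm (D k x) \<le> norm X0 * (1/2)^k * exp (-(2*L)*x)" by (rule Dbound[OF L x])
      also have "\<dots> \<le> norm X0 * (1/2)^k * exp ((2*L)*real n)"
      proof -
        have "L*(-x) \<le> L*real n" using x L by (intro mult_left_mono) auto
        then have "exp (-(2*L)*x) \<le> exp ((2*L)*real n)" by simp
        then show ?thesis by (intro mult_left_mono) auto
      qed
      finally show "norm (D k x) \<le> norm X0 * (1/2)^k * exp ((2*L)*real n)" .
    next
      show "summable (\<lambda>k. norm X0 * (1/2)^k * exp ((2*L)*real n))"
        by (intro summable_mult2 summable_mult summable_geometric) simp
    qed
    then show ?thesis
      unfolding uniform_limit_iff by (simp add: Ysum X_def dist_add_cancel)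
  qed
  have Xcont: "continuous_on {..0} X"
  proof (rule cont_glue)
    fix n :: nat
    show "continuous_on {-real n..0} X"
      by (rule uniform_limit_theorem[OF _ Ylim]) (auto intro!: always_eventually continuous_on_subset[OF Ycont])
  qed
  have Xint: "X x = X0 - integral {x..0} (\<lambda>t. prod (F t) (X t))" if x: "x \<le> 0" for x
  proof -
    obtain n :: nat where n: "-x < real n" using reals_Archimedean2 by blast
    obtain L where L: "L > 0" "\<forall>t\<in>{-real n..0}. \<forall>v. norm (prod (F t) v) \<le> L * norm v"
      using local by blast
    have U: "uniform_limit {x..0} (\<lambda>k t. prod (F t) (Y k t)) (\<lambda>t. prod (F t) (X t)) sequentially"
    proof (rule uniform_limitI)
      fix e :: real assume e: "e > 0"
      have "\<forall>\<^sub>F k in sequentially. \<forall>t\<in>{-real n..0}. dist (Y k t) (X t) < e / L"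
        using uniform_limitD[OF Ylim[of n]] e L by simp
      then show "\<forall>\<^sub>F k in sequentially. \<forall>t\<in>{x..0}. dist (prod (F t) (Y k t)) (prod (F t) (X t)) < e"
      proof (rule eventually_mono, intro ballI)
        fix k t assume H: "\<forall>t\<in>{-real n..0}. dist (Y k t) (X t) < e / L" and t: "t \<in> {x..0}"
        then have tn: "t \<in> {-real n..0}" using n by auto
        have "dist (prod (F t) (Y k t)) (prod (F t) (X t)) = norm (prod (F t) (Y k t - X t))"
          by (simp add: dist_norm bb.diff_right)
        also have "\<dots> \<le> L * norm (Y k t - X t)" using L tn by blast
        also have "\<dots> < L * (e / L)"
          using H tn L by (intro mult_strict_left_mono) (auto simp: dist_norm)
        also have "\<dots> = e" using L by simp
        finally show "dist (prod (F t) (Y k t)) (prod (F t) (X t)) < e" .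
      qed
    qed
    obtain I J where IJ: "\<And>k. ((\<lambda>t. prod (F t) (Y k t)) has_integral I k) {x..0}"
      "((\<lambda>t. prod (F t) (X t)) has_integral J) {x..0}" "I \<longlonglongrightarrow> J"
      by (rule uniform_limit_integral[OF U]) (auto intro!: contP continuous_on_subset[OF Ycont])
    have "(\<lambda>k. Y (Suc k) x) = (\<lambda>k. X0 - I k)"
      by (simp add: YS g_def integral_unique[OF IJ(1)])
    moreover have "(\<lambda>k. Y (Suc k) x) \<longlonglongrightarrow> X x"
      using LIMSEQ_Suc[OF tendsto_uniform_limitI[OF Ylim[of n], of x]] x n by simp
    moreover have "(\<lambda>k. X0 - I k) \<longlonglongrightarrow> X0 - J" by (intro tendsto_intros IJ(3))
    ultimately have "X x = X0 - J" using LIMSEQ_unique by metis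
    then show ?thesis using IJ(2) by (simp add: integral_unique)
  qed
  have X00: "X 0 = X0" using Xint[of 0] by simp
  have Xder: "(X has_vector_derivative prod (F x) (X x)) (at x within {..0})" if x: "x \<le> 0" for x
  proof -
    obtain n :: nat where n: "-x < real n" using reals_Archimedean2 by blast
    define hX where "hX t = prod (F t) (X t)" for t
    have hc: "continuous_on {-real n..0} hX"
      unfolding hX_def by (rule contP, rule continuous_on_subset[OF Xcont]) auto
    have hi: "hX integrable_on {-real n..0}" by (rule integrable_continuous_real[OF hc])
    have eq: "X u = (X0 - integral {-real n..0} hX) + integral {-real n..u} hX" if u: "u \<in> {-real n..0}" for u
    proof -
      have comb: "integral {-real n..u} hX + integral {u..0} hX = integral {-real n..0} hX"
        using u hi by (intro Henstock_Kurzweil_Integration.integral_combine) auto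
      have e1: "X u = X0 - integral {u..0} hX" using Xint[of u] u unfolding hX_def by simp
      show ?thesis unfolding comb[symmetric] e1 by (simp add: algebra_simps)
    qed
    have xn: "x \<in> {-real n..0}" using x n by auto
    have "((\<lambda>u. (X0 - integral {-real n..0} hX) + integral {-real n..u} hX) has_vector_derivative hX x) (at x within {-real n..0})"
      using has_vector_derivative_add[OF has_vector_derivative_const integral_has_vector_derivative[OF hc xn]]
      by simp
    then have "(X has_vector_derivative hX x) (at x within {-real n..0})"
      by (rule has_vector_derivative_transform[OF xn eq, rotated])
    then show ?thesis using at_within_le0[of n x] n x by (simp add: hX_def)
  qed
  show ?thesis using X00 Xcont Xder by blast
qed




lemma mono_within:
  fixes f :: "real \<Rightarrow> real"
  assumes "a \<le> b"
    and d: "\<And>t. t \<in> {a..b} \<Longrightarrow> (f has_real_derivative f' t) (at t within {a..b})"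
    and n: "\<And>t. t \<in> {a..b} \<Longrightarrow> f' t \<le> 0"
  shows "f b \<le> f a"
proof -
  obtain t where t: "t \<in> {a..b}" "f b - f a = (\<lambda>h. h * f' t) (b - a)"
    using mvt_very_simple[OF assms(1), of f "\<lambda>t. (*) (f' t)"] d
    by (auto simp: has_field_derivative_def)
  have "(b - a) * f' t \<le> 0" using n[OF t(1)] assms(1) by (simp add: mult_nonneg_nonpos)
  then show ?thesis using t(2) by simp
qed

lemma mvt_bound:
  fixes h :: "real \<Rightarrow> 'a::real_inner"
  assumes ab: "a \<le> b"
    and dh: "\<And>t. t \<in> {a..b} \<Longrightarrow> (h has_vector_derivative h' t) (at t within {a..b})"
    and dg: "\<And>t. t \<in> {a..b} \<Longrightarrow> (g has_real_derivative g' t) (at t within {a..b})"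
    and bd: "\<And>t. t \<in> {a..b} \<Longrightarrow> norm (h' t) \<le> g' t"
  shows "norm (h b - h a) \<le> g b - g a"
proof -
  define v where "v = h b - h a"
  define k where "k t = inner v (h t) - norm v * g t" for t
  have "k b \<le> k a"
  proof (rule mono_within[OF ab])
    fix t assume t: "t \<in> {a..b}"
    show "(k has_real_derivative (inner v (h' t) - norm v * g' t)) (at t within {a..b})"
    proof -
      have 1: "((\<lambda>x. inner v (h x)) has_vector_derivative inner v (h' t)) (at t within {a..b})"
        by (rule bounded_linear.has_vector_derivative[OF bounded_linear_inner_right dh[OF t]])
      have 2: "((\<lambda>x. norm v * g x) has_real_derivative norm v * g' t) (at t within {a..b})"
        by (rule DERIV_cmult[OF dg[OF t]])
      show ?thesis unfolding k_def
        by (rule DERIV_diff[OF 1[unfolded has_real_derivative_iff_has_vector_derivative[symmetric]] 2])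
    qed
    have "inner v (h' t) \<le> norm v * norm (h' t)" by (rule norm_cauchy_schwarz)
    also have "\<dots> \<le> norm v * g' t" using bd[OF t] by (simp add: mult_left_mono)
    finally show "inner v (h' t) - norm v * g' t \<le> 0" by simp
  qed
  then have "inner v v \<le> norm v * (g b - g a)"
    unfolding k_def v_def by (simp add: inner_diff_right algebra_simps)
  then have "norm v * norm v \<le> norm v * (g b - g a)"
    by (simp add: dot_square_norm power2_eq_square)
  moreover have "- g b \<le> - g a"
  proof (rule mono_within[OF ab])
    fix t assume t: "t \<in> {a..b}"
    show "((\<lambda>t. - g t) has_real_derivative - g' t) (at t within {a..b})"
      by (rule DERIV_minus[OF dg[OF t]])
    show "- g' t \<le> 0" using bd[OF t] norm_ge_zero[of "h' t"] by linarith
  qed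
  ultimately have fin: "norm v \<le> g b - g a"
  proof (cases "norm v = 0")
    case True
    then show ?thesis using \<open>- g b \<le> - g a\<close> by simp
  next
    case False
    then have "norm v > 0" by simp
    then show ?thesis using \<open>norm v * norm v \<le> norm v * (g b - g a)\<close>
      by (simp add: mult_le_cancel_left_pos)
  qed
  then show ?thesis by (simp add: v_def)
qed

lemma energy:
  fixes X D :: "real \<Rightarrow> 'a::real_inner" and r R :: "real \<Rightarrow> real"
  assumes ab: "a \<le> b"
    and dX: "\<And>t. t \<in> {a..b} \<Longrightarrow> (X has_vector_derivative D t) (at t within {a..b})"
    and dR: "\<And>t. t \<in> {a..b} \<Longrightarrow> (R has_real_derivative r t) (at t within {a..b})"
    and bd: "\<And>t. t \<in> {a..b} \<Longrightarrow> \<bar>inner (X t) (D t)\<bar> \<le> r t * (norm (X t))^2"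
  shows "(norm (X b))^2 \<le> (norm (X a))^2 * exp (2*(R b - R a))"
    and "(norm (X a))^2 \<le> (norm (X b))^2 * exp (2*(R b - R a))"
proof -
  have d1: "((\<lambda>t. inner (X t) (X t)) has_real_derivative (2 * inner (X t) (D t))) (at t within {a..b})"
    if t: "t \<in> {a..b}" for t
  proof -
    have "((\<lambda>t. inner (X t) (X t)) has_vector_derivative (inner (X t) (D t) + inner (D t) (X t))) (at t within {a..b})"
      by (rule bounded_bilinear.has_vector_derivative[OF bounded_bilinear_inner dX[OF t] dX[OF t]])
    then show ?thesis
      by (simp add: has_real_derivative_iff_has_vector_derivative inner_commute[of "D t"])
  qed
  have d2: "((\<lambda>t. exp (c * R t)) has_real_derivative exp (c * R t) * (c * r t)) (at t within {a..b})"
    if t: "t \<in> {a..b}" for t c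
    by (auto intro!: derivative_eq_intros dR[OF t])
  have nx: "inner (X t) (X t) = (norm (X t))^2" for t by (simp add: power2_norm_eq_inner)
  have g: "inner (X b) (X b) * exp (-2 * R b) \<le> inner (X a) (X a) * exp (-2 * R a)"
  proof (rule mono_within[OF ab])
    fix t assume t: "t \<in> {a..b}"
    show "((\<lambda>t. inner (X t) (X t) * exp (-2 * R t)) has_real_derivative
       inner (X t) (X t) * (exp (-2 * R t) * (-2 * r t)) + (2 * inner (X t) (D t)) * exp (-2 * R t)) (at t within {a..b})"
      by (rule DERIV_mult'[OF d1[OF t] d2[OF t]])
    have "inner (X t) (D t) \<le> r t * inner (X t) (X t)" using bd[OF t] by (simp add: nx)
    then have "(2 * inner (X t) (D t) - 2 * r t * inner (X t) (X t)) * exp (-2 * R t) \<le> 0"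
      by (intro mult_nonpos_nonneg) auto
    then show "inner (X t) (X t) * (exp (-2 * R t) * (-2 * r t)) + (2 * inner (X t) (D t)) * exp (-2 * R t) \<le> 0"
      by (simp add: algebra_simps)
  qed
  have h: "- (inner (X b) (X b) * exp (2 * R b)) \<le> - (inner (X a) (X a) * exp (2 * R a))"
  proof (rule mono_within[OF ab])
    fix t assume t: "t \<in> {a..b}"
    show "((\<lambda>t. - (inner (X t) (X t) * exp (2 * R t))) has_real_derivative
       - (inner (X t) (X t) * (exp (2 * R t) * (2 * r t)) + (2 * inner (X t) (D t)) * exp (2 * R t))) (at t within {a..b})"
      by (rule DERIV_minus[OF DERIV_mult'[OF d1[OF t] d2[OF t]]])
    have "- inner (X t) (D t) \<le> r t * inner (X t) (X t)" using bd[OF t] by (simp add: nx)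
    then have "(2 * inner (X t) (D t) + 2 * r t * inner (X t) (X t)) * exp (2 * R t) \<ge> 0"
      by (intro mult_nonneg_nonneg) auto
    then show "- (inner (X t) (X t) * (exp (2 * R t) * (2 * r t)) + (2 * inner (X t) (D t)) * exp (2 * R t)) \<le> 0"
      by (simp add: algebra_simps)
  qed
  show "(norm (X b))^2 \<le> (norm (X a))^2 * exp (2*(R b - R a))"
  proof -
    have g': "(norm (X b))^2 * exp (-2*R b) \<le> (norm (X a))^2 * exp (-2*R a)" using g by (simp add: nx)
    have "(norm (X b))^2 = (norm (X b))^2 * exp (-2*R b) * exp (2*R b)"
      by (simp add: mult.assoc exp_add[symmetric])
    also have "\<dots> \<le> (norm (X a))^2 * exp (-2*R a) * exp (2*R b)"
      by (rule mult_right_mono[OF g']) simp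
    also have "\<dots> = (norm (X a))^2 * exp (2*(R b - R a))"
      by (simp add: mult.assoc exp_add[symmetric] algebra_simps)
    finally show ?thesis .
  qed
  show "(norm (X a))^2 \<le> (norm (X b))^2 * exp (2*(R b - R a))"
  proof -
    have h': "(norm (X a))^2 * exp (2*R a) \<le> (norm (X b))^2 * exp (2*R b)" using h by (simp add: nx)
    have "(norm (X a))^2 = (norm (X a))^2 * exp (2*R a) * exp (-2*R a)"
      by (simp add: mult.assoc exp_add[symmetric])
    also have "\<dots> \<le> (norm (X b))^2 * exp (2*R b) * exp (-2*R a)"
      by (rule mult_right_mono[OF h']) simp
    also have "\<dots> = (norm (X b))^2 * exp (2*(R b - R a))"
      by (simp add: mult.assoc exp_add[symmetric] algebra_simps)
    finally show ?thesis .
  qed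
qed


lemma matrix_add_rdistrib': "((A::complex^'n^'n) + B) ** C = A ** C + B ** C"
  by (vector matrix_matrix_mult_def sum.distrib[symmetric] field_simps)

lemma matrix_diff_rdistrib': "((A::complex^'n^'n) - B) ** C = A ** C - B ** C"
  by (vector matrix_matrix_mult_def sum_subtractf[symmetric] field_simps)

lemma matrix_diff_ldistrib': "(C::complex^'n^'n) ** (A - B) = C ** A - C ** B"
  by (vector matrix_matrix_mult_def sum_subtractf[symmetric] field_simps)

lemma matrix_neg_left': "(- (A::complex^'n^'n)) ** C = - (A ** C)"
  by (vector matrix_matrix_mult_def sum_negf[symmetric])

lemma bb_mm: "bounded_bilinear (\<lambda>(A::complex^'n^'n) (B::complex^'n^'n). A ** B)"
  apply (rule bounded_bilinear.intro)
  subgoal by (rule matrix_add_rdistrib')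
  subgoal by (rule matrix_add_ldistrib)
  subgoal by (simp add: scalar_matrix_assoc)
  subgoal by (simp add: matrix_scalar_ac scalar_matrix_assoc)
  subgoal by (rule exI[of _ 1]) (auto intro: norm_mat_mult)
  done

lemma bb_mm_flip: "bounded_bilinear (\<lambda>(A::complex^'n^'n) (B::complex^'n^'n). B ** A)"
  apply (rule bounded_bilinear.intro)
  subgoal by (rule matrix_add_ldistrib)
  subgoal by (rule matrix_add_rdistrib')
  subgoal by (simp add: matrix_scalar_ac scalar_matrix_assoc)
  subgoal by (simp add: scalar_matrix_assoc)
  subgoal by (rule exI[of _ 1]) (auto intro: order_trans[OF norm_mat_mult] simp: mult.commute)
  done

lemma norm_mat_vec: "norm ((A::complex^'n^'n) *v x) \<le> norm A * norm x"
proof -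
  have e: "(cmod ((A *v x)$i))^2 \<le> (\<Sum>k\<in>UNIV. (cmod (A$i$k))^2) * (\<Sum>k\<in>UNIV. (cmod (x$k))^2)" for i
  proof -
    have "cmod ((A *v x)$i) \<le> (\<Sum>k\<in>UNIV. cmod (A$i$k) * cmod (x$k))"
      unfolding matrix_vector_mult_def by (simp add: norm_mult order_trans[OF norm_sum])
    then have "(cmod ((A *v x)$i))^2 \<le> (\<Sum>k\<in>UNIV. cmod (A$i$k) * cmod (x$k))^2"
      by (simp add: power_mono)
    also have "\<dots> \<le> (\<Sum>k\<in>UNIV. (cmod (A$i$k))^2) * (\<Sum>k\<in>UNIV. (cmod (x$k))^2)"
      by (rule Cauchy_Schwarz_ineq_sum)
    finally show ?thesis .
  qed
  have nx: "(norm x)^2 = (\<Sum>k\<in>UNIV. (cmod (x$k))^2)"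
    by (simp add: norm_vec_def L2_set_def sum_nonneg)
  have "(norm (A *v x))^2 = (\<Sum>i\<in>UNIV. (cmod ((A *v x)$i))^2)"
    by (simp add: norm_vec_def L2_set_def sum_nonneg)
  also have "\<dots> \<le> (\<Sum>i\<in>UNIV. (\<Sum>k\<in>UNIV. (cmod (A$i$k))^2) * (\<Sum>k\<in>UNIV. (cmod (x$k))^2))"
    by (intro sum_mono e)
  also have "\<dots> = (norm A * norm x)^2"
    by (simp add: normsq_mat nx power_mult_distrib sum_distrib_right)
  finally show ?thesis
    by (meson mult_nonneg_nonneg norm_ge_zero power2_le_imp_le)
qed

lemma inv_small:
  assumes "norm (X::complex^'n^'n) < 1"
  shows "invertible (mat 1 + X)"
proof -
  have "\<forall>x. (mat 1 + X) *v x = 0 \<longrightarrow> x = 0"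
  proof (intro allI impI)
    fix x :: "complex^'n" assume "(mat 1 + X) *v x = 0"
    then have "x = - (X *v x)" by (simp add: matrix_vector_mult_add_rdistrib eq_neg_iff_add_eq_0)
    then have "norm x = norm (X *v x)" by (metis norm_minus_cancel)
    also have "\<dots> \<le> norm X * norm x" by (rule norm_mat_vec)
    finally have "(1 - norm X) * norm x \<le> 0" by (simp add: algebra_simps)
    then have "norm x \<le> 0" using assms by (simp add: mult_le_0_iff)
    then show "x = 0" by simp
  qed
  then show ?thesis
    by (simp add: invertible_left_inverse matrix_left_invertible_ker)
qed



lemma inner_ReM_left: "inner (X::complex^'n^'n) ((M::complex^'n^'n) ** X) = inner X (Re_mat M ** X)"
  by (simp add: Re_mat_def scalar_matrix_assoc[symmetric] matrix_add_rdistrib' inner_add_right inner_adj_left)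

lemma inner_ReM_right: "inner (X::complex^'n^'n) (X ** (M::complex^'n^'n)) = inner X (X ** Re_mat M)"
  by (simp add: Re_mat_def matrix_scalar_ac scalar_matrix_assoc[symmetric] matrix_add_ldistrib inner_add_right inner_adj_right)

lemma inner_bound_left: "\<bar>inner (X::complex^'n^'n) ((M::complex^'n^'n) ** X)\<bar> \<le> norm (Re_mat M) * (norm X)^2"
proof -
  have "\<bar>inner X (Re_mat M ** X)\<bar> \<le> norm X * norm (Re_mat M ** X)" by (rule Cauchy_Schwarz_ineq2)
  also have "\<dots> \<le> norm X * (norm (Re_mat M) * norm X)" by (intro mult_left_mono norm_mat_mult) auto
  finally show ?thesis unfolding inner_ReM_left[of X M] by (simp add: power2_eq_square mult_ac)
qed

lemma inner_bound_right: "\<bar>inner (X::complex^'n^'n) (X ** (M::complex^'n^'n))\<bar> \<le> norm (Re_mat M) * (norm X)^2"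
proof -
  have "\<bar>inner X (X ** Re_mat M)\<bar> \<le> norm X * norm (X ** Re_mat M)" by (rule Cauchy_Schwarz_ineq2)
  also have "\<dots> \<le> norm X * (norm X * norm (Re_mat M))" by (intro mult_left_mono norm_mat_mult) auto
  finally show ?thesis unfolding inner_ReM_right[of X M] by (simp add: power2_eq_square mult_ac)
qed




lemma energy_sym:
  fixes X D :: "real \<Rightarrow> 'a::real_inner"
  assumes dX: "\<And>t. t \<le> 0 \<Longrightarrow> (X has_vector_derivative D t) (at t within {..0})"
    and bd: "\<And>t. t \<le> 0 \<Longrightarrow> \<bar>inner (X t) (D t)\<bar> \<le> (\<alpha> + \<beta> * exp (\<gamma> * t)) * (norm (X t))^2"
    and pos: "\<alpha> \<ge> 0" "\<beta> \<ge> 0" "\<gamma> > 0"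
    and xy: "x \<le> 0" "y \<le> 0"
  shows "norm (X x) \<le> norm (X y) * exp (\<alpha> * \<bar>x - y\<bar> + \<beta> / \<gamma>)"
proof -
  define R where "R t = \<alpha> * t + \<beta> / \<gamma> * exp (\<gamma> * t)" for t
  have dR: "(R has_real_derivative (\<alpha> + \<beta> * exp (\<gamma> * t))) (at t within S)" for t S
    unfolding R_def using pos(3)
    by (auto intro!: derivative_eq_intros simp: field_simps)
  have Rdiff: "R b - R a \<le> \<alpha> * \<bar>x - y\<bar> + \<beta> / \<gamma>"
    if "a \<le> b" "b \<le> 0" "\<bar>b - a\<bar> = \<bar>x - y\<bar>" for a b
  proof -
    have "exp (\<gamma> * b) \<le> 1" using pos(3) that(2) by (simp add: mult_nonneg_nonpos)
    then have "\<beta> / \<gamma> * exp (\<gamma> * b) \<le> \<beta> / \<gamma>" using pos by (intro mult_left_le) auto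
    moreover have "\<beta> / \<gamma> * exp (\<gamma> * a) \<ge> 0" using pos by simp
    moreover have "\<alpha> * b - \<alpha> * a = \<alpha> * \<bar>x - y\<bar>" using that by (simp add: right_diff_distrib[symmetric])
    ultimately show ?thesis unfolding R_def by linarith
  qed
  have main: "(norm (X x))^2 \<le> (norm (X y))^2 * exp (2 * (\<alpha> * \<bar>x - y\<bar> + \<beta> / \<gamma>))"
  proof (cases "y \<le> x")
    case True
    have "(norm (X x))^2 \<le> (norm (X y))^2 * exp (2*(R x - R y))"
      by (rule energy(1)[OF True, of X D R "\<lambda>t. \<alpha> + \<beta> * exp (\<gamma> * t)"])
         (use xy in \<open>auto intro: has_vector_derivative_within_subset[OF dX] dR bd\<close>)
    also have "\<dots> \<le> (norm (X y))^2 * exp (2 * (\<alpha> * \<bar>x - y\<bar> + \<beta> / \<gamma>))"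
      using Rdiff[of y x] True xy by (intro mult_left_mono) auto
    finally show ?thesis .
  next
    case False
    then have yx: "x \<le> y" by simp
    have "(norm (X x))^2 \<le> (norm (X y))^2 * exp (2*(R y - R x))"
      by (rule energy(2)[OF yx, of X D R "\<lambda>t. \<alpha> + \<beta> * exp (\<gamma> * t)"])
         (use xy in \<open>auto intro: has_vector_derivative_within_subset[OF dX] dR bd\<close>)
    also have "\<dots> \<le> (norm (X y))^2 * exp (2 * (\<alpha> * \<bar>x - y\<bar> + \<beta> / \<gamma>))"
      using Rdiff[of x y] yx xy by (intro mult_left_mono) auto
    finally show ?thesis .
  qed
  also have "\<dots> = (norm (X y) * exp (\<alpha> * \<bar>x - y\<bar> + \<beta> / \<gamma>))^2"
  proof -
    have "exp (2 * (\<alpha> * \<bar>x - y\<bar> + \<beta> / \<gamma>)) = (exp (\<alpha> * \<bar>x - y\<bar> + \<beta> / \<gamma>))^2"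
      by (simp only: power2_eq_square exp_add[symmetric] mult_2)
    then show ?thesis by (simp add: power_mult_distrib)
  qed
  finally show ?thesis
    by (rule power2_le_imp_le) simp
qed




lemma matrix_neg_right': "(C::complex^'n^'n) ** (- A) = - (C ** A)"
  by (vector matrix_matrix_mult_def sum_negf[symmetric])

lemma norm_mat1_pos: "norm (mat 1 :: complex^'n^'n) > 0"
proof -
  have "(mat 1 :: complex^'n^'n) $ i $ i = 1" for i by (simp add: mat_def)
  then have "(mat 1 :: complex^'n^'n) \<noteq> 0" by (metis one_neq_zero zero_index)
  then show ?thesis by simp
qed

lemma core:
  fixes M Th :: "real \<Rightarrow> complex^'n^'n" and C \<theta> \<epsilon> d :: real
  assumes Cp: "C > 0" and tp: "\<theta> > 0" and ep: "\<epsilon> > 0" and d0: "d \<ge> 0" and d1: "d \<le> \<theta>/4"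
    and Mc: "continuous_on {..0} M" and Tc: "continuous_on {..0} Th"
    and Tb: "\<And>x. x \<le> 0 \<Longrightarrow> norm (Th x) \<le> C*\<epsilon>^2*exp(-\<theta>*\<epsilon>*\<bar>x\<bar>)"
    and Mb: "\<And>x. x \<le> 0 \<Longrightarrow> norm (Re_mat (M x)) \<le> \<epsilon>*d + C*\<epsilon>*exp(-\<theta>*\<epsilon>*\<bar>x\<bar>)"
    and e1: "2*((norm (mat 1 :: complex^'n^'n) * exp (C/\<theta>))^2*C)*\<epsilon>/\<theta> \<le> 1"
    and e2: "2*((norm (mat 1 :: complex^'n^'n) * exp (C/\<theta>))^2*C)*\<epsilon>*norm (mat 1 :: complex^'n^'n)*exp 1/\<theta> \<le> 1/2"
  shows "\<exists>P. (\<forall>x\<le>0. norm (P x - mat 1) \<le> (2*((norm (mat 1 :: complex^'n^'n) * exp (C/\<theta>))^3*norm (mat 1 :: complex^'n^'n)*exp 1*C)/\<theta>) * \<epsilon> * exp (\<theta>*\<epsilon>*x/2))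
      \<and> (\<forall>x\<le>0. (P has_vector_derivative ((M x + Th x) ** P x - P x ** M x)) (at x within {..0}))"
proof -
  define N where "N = norm (mat 1 :: complex^'n^'n)"
  define K0 where "K0 = N * exp (C/\<theta>)"
  define Aq where "Aq = K0^2*C"
  define A2 where "A2 = K0^3*N*exp 1*C"
  define \<gamma> where "\<gamma> = \<theta>*\<epsilon>/2"
  have Np: "N > 0" unfolding N_def by (rule norm_mat1_pos)
  have K0p: "K0 > 0" unfolding K0_def using Np by simp
  have Aqp: "Aq > 0" unfolding Aq_def using K0p Cp by simp
  have A2p: "A2 > 0" unfolding A2_def using K0p Np Cp by simp
  have gp: "\<gamma> > 0" unfolding \<gamma>_def using tp ep by simp
  have e1': "Aq*\<epsilon>^2/\<gamma> \<le> 1" using e1 ep tp by (simp add: Aq_def K0_def N_def \<gamma>_def power2_eq_square field_simps)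
  have e2': "Aq*\<epsilon>^2*(N*exp 1)/\<gamma> \<le> 1/2" using e2 ep tp by (simp add: Aq_def K0_def N_def \<gamma>_def power2_eq_square field_simps)
  have absx: "exp(-\<theta>*\<epsilon>*\<bar>x\<bar>) = exp (\<theta>*\<epsilon>*x)" if "x \<le> 0" for x using that by simp
  obtain Phi where Phi0: "Phi 0 = mat 1" and Phic: "continuous_on {..0} Phi"
    and Phid: "\<And>x. x \<le> 0 \<Longrightarrow> (Phi has_vector_derivative M x ** Phi x) (at x within {..0})"
    using lin_ode_exists[OF bb_mm Mc, of "mat 1"] by auto
  have Mc': "continuous_on {..0} (\<lambda>x. - M x)" by (rule continuous_on_minus[OF Mc])
  obtain Z where Z0: "Z 0 = mat 1" and Zc: "continuous_on {..0} Z"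
    and Zd: "\<And>x. x \<le> 0 \<Longrightarrow> (Z has_vector_derivative Z x ** (- M x)) (at x within {..0})"
    using lin_ode_exists[OF bb_mm_flip Mc', of "mat 1"] by auto
  have "\<exists>c. \<forall>x\<in>{..0}. Z x ** Phi x = c"
  proof (rule has_derivative_zero_constant)
    fix x :: real assume x: "x \<in> {..0}"
    have "((\<lambda>x. Z x ** Phi x) has_vector_derivative (Z x ** (M x ** Phi x) + (Z x ** - M x) ** Phi x)) (at x within {..0})"
      using bounded_bilinear.has_vector_derivative[OF bb_mm Zd Phid] x by simp
    moreover have "Z x ** (M x ** Phi x) + (Z x ** - M x) ** Phi x = 0"
      by (simp add: matrix_neg_right' matrix_neg_left' matrix_mul_assoc)
    ultimately show "((\<lambda>x. Z x ** Phi x) has_derivative (\<lambda>h. 0)) (at x within {..0})"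
      by (simp add: has_vector_derivative_def)
  qed simp
  then have ZPhi: "Z x ** Phi x = mat 1" if "x \<le> 0" for x
    using that Z0 Phi0 by (metis atMost_iff matrix_mul_lid order_refl)
  have PhiZ: "Phi x ** Z x = mat 1" if "x \<le> 0" for x
    using ZPhi[OF that] matrix_left_right_inverse by blast
  have Gb: "norm (Phi x ** Z y) \<le> K0 * exp (\<epsilon>*d*\<bar>x - y\<bar>)" if x: "x \<le> 0" and y: "y \<le> 0" for x y
  proof -
    have "norm (Phi x ** Z y) \<le> norm (Phi y ** Z y) * exp (\<epsilon>*d*\<bar>x - y\<bar> + (C*\<epsilon>)/(\<theta>*\<epsilon>))"
    proof (rule energy_sym[of "\<lambda>x. Phi x ** Z y" "\<lambda>t. M t ** (Phi t ** Z y)"])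
      fix t :: real assume t: "t \<le> 0"
      show "((\<lambda>x. Phi x ** Z y) has_vector_derivative M t ** (Phi t ** Z y)) (at t within {..0})"
        using bounded_bilinear.has_vector_derivative[OF bb_mm Phid[OF t] has_vector_derivative_const[of "Z y"]]
        by (simp add: matrix_mul_assoc)
      have "\<bar>inner (Phi t ** Z y) (M t ** (Phi t ** Z y))\<bar> \<le> norm (Re_mat (M t)) * (norm (Phi t ** Z y))^2"
        by (rule inner_bound_left)
      also have "\<dots> \<le> (\<epsilon>*d + C*\<epsilon> * exp (\<theta>*\<epsilon> * t)) * (norm (Phi t ** Z y))^2"
        using Mb[OF t] absx[OF t] by (intro mult_right_mono) auto
      finally show "\<bar>inner (Phi t ** Z y) (M t ** (Phi t ** Z y))\<bar> \<le> (\<epsilon>*d + C*\<epsilon> * exp (\<theta>*\<epsilon> * t)) * (norm (Phi t ** Z y))^2" .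
    qed (use x y ep d0 Cp tp in auto)
    also have "\<dots> = K0 * exp (\<epsilon>*d*\<bar>x - y\<bar>)"
      using ep by (simp add: PhiZ[OF y] K0_def N_def exp_add)
    finally show ?thesis .
  qed
  have Phib: "norm (Phi t) \<le> K0 * exp (\<epsilon>*d*(-t))" if "t \<le> 0" for t
    using Gb[OF that order_refl] that by (simp add: Z0)
  have Zb: "norm (Z t) \<le> K0 * exp (\<epsilon>*d*(-t))" if "t \<le> 0" for t
    using Gb[OF order_refl that] that by (simp add: Phi0)
  define Bm where "Bm t = Z t ** Th t ** Phi t" for t
  have Bc: "continuous_on {..0} Bm"
    unfolding Bm_def
    by (intro bounded_bilinear.continuous_on[OF bb_mm] Zc Tc Phic)
  have Bb: "norm (Bm t) \<le> Aq*\<epsilon>^2*exp (\<gamma>*t)" if t: "t \<le> 0" for t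
  proof -
    have "norm (Bm t) \<le> norm (Z t) * norm (Th t) * norm (Phi t)"
      unfolding Bm_def by (meson norm_mat_mult order_trans mult_right_mono norm_ge_zero)
    also have "\<dots> \<le> (K0 * exp (\<epsilon>*d*(-t))) * (C*\<epsilon>^2*exp (\<theta>*\<epsilon>*t)) * (K0 * exp (\<epsilon>*d*(-t)))"
      using Zb[OF t] Tb[OF t] Phib[OF t] absx[OF t] K0p Cp
      by (intro mult_mono) (auto intro: mult_nonneg_nonneg)
    also have "\<dots> = Aq*\<epsilon>^2*exp (\<epsilon>*d*(-t) + \<theta>*\<epsilon>*t + \<epsilon>*d*(-t))"
      by (simp only: exp_add) (simp add: Aq_def power2_eq_square mult_ac)
    also have "\<dots> \<le> Aq*\<epsilon>^2*exp (\<gamma>*t)"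
    proof -
      have "\<epsilon>*t \<le> 0" using ep t by (simp add: mult_nonneg_nonpos)
      moreover have "\<theta>/2 - 2*d \<ge> 0" using d1 by simp
      ultimately have "\<epsilon>*t*(\<theta>/2 - 2*d) \<le> 0" by (rule mult_nonpos_nonneg)
      then have "\<epsilon>*d*(-t) + \<theta>*\<epsilon>*t + \<epsilon>*d*(-t) \<le> \<gamma>*t" unfolding \<gamma>_def by (simp add: algebra_simps)
      then show ?thesis using Aqp by (intro mult_left_mono) auto
    qed
    finally show ?thesis .
  qed
  obtain V where V0: "V 0 = mat 1" and Vc: "continuous_on {..0} V"
    and Vd: "\<And>x. x \<le> 0 \<Longrightarrow> (V has_vector_derivative Bm x ** V x) (at x within {..0})"
    using lin_ode_exists[OF bb_mm Bc, of "mat 1"] by auto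
  have Bin: "\<bar>inner W (Bm t ** W)\<bar> \<le> Aq*\<epsilon>^2 * exp (\<gamma>*t) * (norm W)^2" if t: "t \<le> 0" for W :: "complex^'n^'n" and t
  proof -
    have "\<bar>inner W (Bm t ** W)\<bar> \<le> norm W * norm (Bm t ** W)" by (rule Cauchy_Schwarz_ineq2)
    also have "\<dots> \<le> norm W * (norm (Bm t) * norm W)" by (intro mult_left_mono norm_mat_mult) auto
    also have "\<dots> \<le> norm W * ((Aq*\<epsilon>^2*exp (\<gamma>*t)) * norm W)"
      by (intro mult_left_mono mult_right_mono Bb[OF t]) auto
    finally show ?thesis by (simp add: power2_eq_square mult_ac)
  qed
  have Vb: "norm (V x) \<le> norm (V y) * exp 1" if "x \<le> 0" "y \<le> 0" for x y
  proof -
    have "norm (V x) \<le> norm (V y) * exp (0 * \<bar>x - y\<bar> + Aq*\<epsilon>^2/\<gamma>)"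
      by (rule energy_sym[of V "\<lambda>t. Bm t ** V t"]) (use that gp Aqp in \<open>auto intro: Vd Bin\<close>)
    also have "\<dots> \<le> norm (V y) * exp 1" using e1' by (intro mult_left_mono) auto
    finally show ?thesis .
  qed
  define c2 where "c2 = Aq*\<epsilon>^2*(N*exp 1)/\<gamma>"
  have c2p: "c2 \<ge> 0" unfolding c2_def using Aqp Np gp by simp
  have VN: "norm (V s) \<le> N * exp 1" if "s \<le> 0" for s using Vb[OF that order_refl] V0 by (simp add: N_def)
  have Vinc: "norm (V b - V a) \<le> c2 * exp (\<gamma>*b)" if ab: "a \<le> b" "b \<le> 0" for a b
  proof -
    have "norm (V b - V a) \<le> c2 * exp (\<gamma>*b) - c2 * exp (\<gamma>*a)"
    proof (rule mvt_bound[OF ab(1), of V "\<lambda>s. Bm s ** V s" "\<lambda>s. c2 * exp (\<gamma>* s)" "\<lambda>s. c2 * (exp (\<gamma>* s) * \<gamma>)"])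
      fix s assume s: "s \<in> {a..b}"
      then have s0: "s \<le> 0" using ab by auto
      show "(V has_vector_derivative Bm s ** V s) (at s within {a..b})"
        by (rule has_vector_derivative_within_subset[OF Vd[OF s0]]) (use ab in auto)
      show "((\<lambda>s. c2 * exp (\<gamma>* s)) has_real_derivative c2 * (exp (\<gamma>* s) * \<gamma>)) (at s within {a..b})"
        by (auto intro!: derivative_eq_intros)
      have "norm (Bm s ** V s) \<le> norm (Bm s) * norm (V s)" by (rule norm_mat_mult)
      also have "\<dots> \<le> (Aq*\<epsilon>^2*exp (\<gamma>* s)) * (N * exp 1)"
        by (intro mult_mono Bb[OF s0] VN[OF s0]) (use Aqp in auto)
      also have "\<dots> = c2 * (exp (\<gamma>* s) * \<gamma>)" unfolding c2_def using gp by (simp add: field_simps)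
      finally show "norm (Bm s ** V s) \<le> c2 * (exp (\<gamma>* s) * \<gamma>)" .
    qed
    also have "\<dots> \<le> c2 * exp (\<gamma>*b)" using c2p by simp
    finally show ?thesis .
  qed
  define inc where "inc k = V (-real k) - V (-real (Suc k))" for k
  have incb: "norm (inc k) \<le> c2 * exp (-\<gamma>) ^ k" for k
  proof -
    have "norm (inc k) = norm (V (-real k) - V (-real (Suc k)))" by (simp add: inc_def)
    also have "\<dots> \<le> c2 * exp (\<gamma>*(-real k))" by (rule Vinc) auto
    also have "\<dots> = c2 * exp (-\<gamma>) ^ k" by (simp add: exp_of_nat_mult[symmetric] mult_ac)
    finally show ?thesis .
  qed
  have "summable (\<lambda>k. c2 * exp (-\<gamma>) ^ k)" using gp by (intro summable_mult summable_geometric) simp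
  then have sinc: "summable inc"
    by (rule summable_comparison_test'[where N=0]) (rule incb)
  have Vtel: "V (-real n) = V 0 - (\<Sum>k<n. inc k)" for n
    by (induction n) (simp_all add: inc_def)
  define L where "L = V 0 - suminf inc"
  have Vlim: "(\<lambda>n. V (-real n)) \<longlonglongrightarrow> L"
    unfolding Vtel L_def by (intro tendsto_diff tendsto_const summable_LIMSEQ sinc)
  have VL: "norm (V x - L) \<le> c2 * exp (\<gamma>*x)" if x: "x \<le> 0" for x
  proof (rule LIMSEQ_le_const2)
    show "(\<lambda>n. norm (V x - V (-real n))) \<longlonglongrightarrow> norm (V x - L)" by (intro tendsto_intros Vlim)
    obtain n0 :: nat where "-x \<le> real n0" using real_arch_simple by blast
    then show "\<exists>n1. \<forall>n\<ge>n1. norm (V x - V (-real n)) \<le> c2 * exp (\<gamma>*x)"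
      using x by (intro exI[of _ n0] allI impI Vinc) auto
  qed
  have L1: "norm (L - mat 1) \<le> 1/2"
  proof -
    have "norm (L - mat 1) = norm (V 0 - L)" by (simp add: V0 norm_minus_commute)
    also have "\<dots> \<le> c2" using VL[of 0] by simp
    also have "\<dots> \<le> 1/2" using e2' by (simp add: c2_def)
    finally show ?thesis .
  qed
  have "invertible (mat 1 + (L - mat 1))" by (rule inv_small) (use L1 in simp)
  then obtain Li where LLi: "L ** Li = mat 1" by (auto simp: invertible_def)
  define U where "U t = V t ** Li" for t
  have Ud: "(U has_vector_derivative Bm x ** U x) (at x within {..0})" if "x \<le> 0" for x
    using bounded_bilinear.has_vector_derivative[OF bb_mm Vd[OF that] has_vector_derivative_const[of Li]]
    by (simp add: U_def[abs_def] matrix_mul_assoc)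
  have Ulim: "(\<lambda>n. U (-real n)) \<longlonglongrightarrow> mat 1"
    using bounded_bilinear.tendsto[OF bb_mm Vlim tendsto_const[of Li]] by (simp add: U_def LLi)
  have UN: "norm (U s) \<le> N * exp 1" if s: "s \<le> 0" for s
  proof (rule LIMSEQ_le_const)
    show "(\<lambda>n. norm (U (-real n)) * exp 1) \<longlonglongrightarrow> N * exp 1"
      unfolding N_def by (intro tendsto_intros Ulim)
    show "\<exists>n1. \<forall>n\<ge>n1. norm (U s) \<le> norm (U (-real n)) * exp 1"
    proof (intro exI allI impI)
      fix n :: nat
      have "norm (U s) \<le> norm (U (-real n)) * exp (0 * \<bar>s - (-real n)\<bar> + Aq*\<epsilon>^2/\<gamma>)"
        by (rule energy_sym[of U "\<lambda>t. Bm t ** U t"]) (use s gp Aqp in \<open>auto intro: Ud Bin\<close>)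
      also have "\<dots> \<le> norm (U (-real n)) * exp 1" using e1' by (intro mult_left_mono) auto
      finally show "norm (U s) \<le> norm (U (-real n)) * exp 1" .
    qed
  qed
  define P where "P t = Phi t ** U t ** Z t" for t
  have Pd: "(P has_vector_derivative ((M x + Th x) ** P x - P x ** M x)) (at x within {..0})" if x: "x \<le> 0" for x
  proof -
    have "(P has_vector_derivative ((Phi x ** U x) ** (Z x ** - M x) + (Phi x ** (Bm x ** U x) + (M x ** Phi x) ** U x) ** Z x)) (at x within {..0})"
      unfolding P_def[abs_def]
      using bounded_bilinear.has_vector_derivative[OF bb_mm bounded_bilinear.has_vector_derivative[OF bb_mm Phid[OF x] Ud[OF x]] Zd[OF x]]
      by simp
    moreover have "(Phi x ** U x) ** (Z x ** - M x) + (Phi x ** (Bm x ** U x) + (M x ** Phi x) ** U x) ** Z x = (M x + Th x) ** P x - P x ** M x"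
      unfolding P_def Bm_def
      by (simp add: matrix_add_rdistrib' matrix_add_ldistrib matrix_neg_right' matrix_mul_assoc PhiZ[OF x])
    ultimately show ?thesis by simp
  qed
  have Pb: "norm (P x - mat 1) \<le> (2*A2/\<theta>) * \<epsilon> * exp (\<theta>*\<epsilon>*x/2)" if x: "x \<le> 0" for x
  proof -
    define g where "g s = (2*A2/\<theta>) * \<epsilon> * exp (\<gamma> * s)" for s
    have gx: "g x = (2*A2/\<theta>) * \<epsilon> * exp (\<theta>*\<epsilon>*x/2)" unfolding g_def \<gamma>_def by (simp add: mult_ac)
    have hb: "norm (P x - Phi x ** U (-real n) ** Z x) \<le> g x" if n: "-real n \<le> x" for n
    proof -
      have "norm (Phi x ** U x ** Z x - Phi x ** U (-real n) ** Z x) \<le> g x - g (-real n)"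
      proof (rule mvt_bound[OF n, of "\<lambda>s. Phi x ** U s ** Z x" "\<lambda>s. Phi x ** (Bm s ** U s) ** Z x" g "\<lambda>s. A2*\<epsilon>^2*exp (\<gamma> * s)"])
        fix s assume s: "s \<in> {-real n..x}"
        then have s0: "s \<le> 0" "s \<le> x" using x by auto
        have "((\<lambda>s. Phi x ** U s ** Z x) has_vector_derivative Phi x ** (Bm s ** U s) ** Z x) (at s within {..0})"
          using bounded_bilinear.has_vector_derivative[OF bb_mm bounded_bilinear.has_vector_derivative[OF bb_mm has_vector_derivative_const[of "Phi x"] Ud[OF s0(1)]] has_vector_derivative_const[of "Z x"]]
          by simp
        then show "((\<lambda>s. Phi x ** U s ** Z x) has_vector_derivative Phi x ** (Bm s ** U s) ** Z x) (at s within {-real n..x})"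
          by (rule has_vector_derivative_within_subset) (use x in auto)
        show "(g has_real_derivative A2*\<epsilon>^2*exp (\<gamma> * s)) (at s within {-real n..x})"
          unfolding g_def[abs_def] using tp ep
          by (auto intro!: derivative_eq_intros simp: \<gamma>_def field_simps power2_eq_square)
        have eq: "Phi x ** (Bm s ** U s) ** Z x = (Phi x ** Z s) ** Th s ** (Phi s ** U s ** Z x)"
          by (simp add: Bm_def matrix_mul_assoc)
        have n3: "norm (Phi s ** U s ** Z x) \<le> (K0 * exp (\<epsilon>*d*(-s))) * (N * exp 1) * (K0 * exp (\<epsilon>*d*(-x)))"
        proof -
          have "norm (Phi s ** U s ** Z x) \<le> norm (Phi s) * norm (U s) * norm (Z x)"
            by (meson norm_mat_mult order_trans mult_right_mono norm_ge_zero)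
          also have "\<dots> \<le> (K0 * exp (\<epsilon>*d*(-s))) * (N * exp 1) * (K0 * exp (\<epsilon>*d*(-x)))"
            using Phib[OF s0(1)] UN[OF s0(1)] Zb[OF x] K0p Np
            by (intro mult_mono) (auto intro: mult_nonneg_nonneg)
          finally show ?thesis .
        qed
        have "norm (Phi x ** (Bm s ** U s) ** Z x) \<le> norm (Phi x ** Z s) * norm (Th s) * norm (Phi s ** U s ** Z x)"
          unfolding eq by (meson norm_mat_mult order_trans mult_right_mono norm_ge_zero)
        also have "\<dots> \<le> (K0 * exp (\<epsilon>*d*(x - s))) * (C*\<epsilon>^2*exp (\<theta>*\<epsilon>* s)) * ((K0 * exp (\<epsilon>*d*(-s))) * (N * exp 1) * (K0 * exp (\<epsilon>*d*(-x))))"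
          using Gb[OF x s0(1)] Tb[OF s0(1)] absx[OF s0(1)] n3 K0p Cp s0
          by (intro mult_mono) (auto intro: mult_nonneg_nonneg)
        also have "\<dots> = A2*\<epsilon>^2*exp (\<epsilon>*d*(x - s) + \<theta>*\<epsilon>* s + \<epsilon>*d*(-s) + \<epsilon>*d*(-x))"
          by (simp only: exp_add) (simp add: A2_def power2_eq_square power3_eq_cube mult_ac)
        also have "\<dots> \<le> A2*\<epsilon>^2*exp (\<gamma> * s)"
        proof -
          have "\<epsilon>* s \<le> 0" using ep s0 by (simp add: mult_nonneg_nonpos)
          moreover have "\<theta>/2 - 2*d \<ge> 0" using d1 by simp
          ultimately have "\<epsilon>* s*(\<theta>/2 - 2*d) \<le> 0" by (rule mult_nonpos_nonneg)
          then have "\<epsilon>*d*(x - s) + \<theta>*\<epsilon>* s + \<epsilon>*d*(-s) + \<epsilon>*d*(-x) \<le> \<gamma> * s"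
            unfolding \<gamma>_def by (simp add: algebra_simps)
          then show ?thesis using A2p by (intro mult_left_mono) auto
        qed
        finally show "norm (Phi x ** (Bm s ** U s) ** Z x) \<le> A2*\<epsilon>^2*exp (\<gamma> * s)" .
      qed
      also have "\<dots> \<le> g x" unfolding g_def using A2p tp ep by simp
      finally show ?thesis by (simp add: P_def)
    qed
    have "norm (P x - mat 1) \<le> g x"
    proof (rule LIMSEQ_le_const2)
      have "(\<lambda>n. Phi x ** U (-real n) ** Z x) \<longlonglongrightarrow> Phi x ** mat 1 ** Z x"
        by (rule bounded_bilinear.tendsto[OF bb_mm bounded_bilinear.tendsto[OF bb_mm tendsto_const Ulim] tendsto_const])
      then show "(\<lambda>n. norm (P x - Phi x ** U (-real n) ** Z x)) \<longlonglongrightarrow> norm (P x - mat 1)"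
        using PhiZ[OF x] by (intro tendsto_intros) simp
      obtain n0 :: nat where "-x \<le> real n0" using real_arch_simple by blast
      then show "\<exists>n1. \<forall>n\<ge>n1. norm (P x - Phi x ** U (-real n) ** Z x) \<le> g x"
        using x by (intro exI[of _ n0] allI impI hb) auto
    qed
    then show ?thesis using gx by simp
  qed
  show ?thesis
    using Pb Pd unfolding A2_def K0_def N_def by blast
qed



theorem lemma4p3:
  fixes Par :: "(real^'m) set"
    and M \<Theta> :: "real^'m \<Rightarrow> real \<Rightarrow> real \<Rightarrow> complex^'n^'n"
    and \<delta> :: "real^'m \<Rightarrow> real \<Rightarrow> real"
    and C \<theta> :: real
  assumes C_pos: "C > 0" and theta_pos: "\<theta> > 0"
    and M_cont: "\<And>p \<epsilon>. p \<in> Par \<Longrightarrow> \<epsilon> > 0 \<Longrightarrow> continuous_on {..0} (M p \<epsilon>)"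
    and Theta_cont: "\<And>p \<epsilon>. p \<in> Par \<Longrightarrow> \<epsilon> > 0 \<Longrightarrow> continuous_on {..0} (\<Theta> p \<epsilon>)"
    and delta_nonneg: "\<And>p \<epsilon>. p \<in> Par \<Longrightarrow> \<epsilon> > 0 \<Longrightarrow> \<delta> p \<epsilon> \<ge> 0"
    and Theta_bound: "\<And>p \<epsilon> x. p \<in> Par \<Longrightarrow> \<epsilon> > 0 \<Longrightarrow> x \<le> 0 \<Longrightarrow>
        norm (\<Theta> p \<epsilon> x) \<le> C * \<epsilon>\<^sup>2 * exp (- \<theta> * \<epsilon> * \<bar>x\<bar>)"
    and ReM_bound: "\<And>p \<epsilon> x. p \<in> Par \<Longrightarrow> \<epsilon> > 0 \<Longrightarrow> x \<le> 0 \<Longrightarrow>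
        norm (Re_mat (M p \<epsilon> x)) \<le> \<epsilon> * \<delta> p \<epsilon> + C * \<epsilon> * exp (- \<theta> * \<epsilon> * \<bar>x\<bar>)"
  shows "\<exists>\<delta>s > 0. \<exists>\<epsilon>0 > 0. \<exists>C1 > 0. \<forall>p \<in> Par. \<forall>\<epsilon>. 0 < \<epsilon> \<and> \<epsilon> < \<epsilon>0 \<and> \<delta> p \<epsilon> \<le> \<delta>s \<longrightarrow>
     (\<exists>\<Psi> :: real \<Rightarrow> complex^'n^'n.
        (\<forall>x \<le> 0. invertible (mat 1 + \<Psi> x)) \<and>
        (\<forall>x \<le> 0. norm (\<Psi> x) \<le> C1 * \<epsilon> * exp (- \<theta> * \<epsilon> * \<bar>x\<bar> / 2)) \<and>
        (\<forall>x \<le> 0. ((\<lambda>y. mat 1 + \<Psi> y) has_vector_derivative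
            ((M p \<epsilon> x + \<Theta> p \<epsilon> x) ** (mat 1 + \<Psi> x) - (mat 1 + \<Psi> x) ** M p \<epsilon> x))
            (at x within {..0})))"
proof -
  define N where "N = norm (mat 1 :: complex^'n^'n)"
  define K0 where "K0 = N * exp (C/\<theta>)"
  define Aq where "Aq = K0^2*C"
  define A2 where "A2 = K0^3*N*exp 1*C"
  define C1 where "C1 = 2*A2/\<theta>"
  have Np: "N > 0" unfolding N_def by (rule norm_mat1_pos)
  have K0p: "K0 > 0" unfolding K0_def using Np by simp
  have Aqp: "Aq > 0" unfolding Aq_def using K0p C_pos by simp
  have A2p: "A2 > 0" unfolding A2_def using K0p Np C_pos by simp
  have C1p: "C1 > 0" unfolding C1_def using A2p theta_pos by simp
  define e0 where "e0 = min (min (\<theta>/(2*Aq)) (\<theta>/(4*Aq*N*exp 1))) (1/(2*C1))"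
  have e0p: "e0 > 0" unfolding e0_def using theta_pos Aqp Np C1p by simp
  have d4: "\<theta>/4 > 0" using theta_pos by simp
  have main: "\<forall>p \<in> Par. \<forall>\<epsilon>. 0 < \<epsilon> \<and> \<epsilon> < e0 \<and> \<delta> p \<epsilon> \<le> \<theta>/4 \<longrightarrow>
     (\<exists>\<Psi> :: real \<Rightarrow> complex^'n^'n.
        (\<forall>x \<le> 0. invertible (mat 1 + \<Psi> x)) \<and>
        (\<forall>x \<le> 0. norm (\<Psi> x) \<le> C1 * \<epsilon> * exp (- \<theta> * \<epsilon> * \<bar>x\<bar> / 2)) \<and>
        (\<forall>x \<le> 0. ((\<lambda>y. mat 1 + \<Psi> y) has_vector_derivative
            ((M p \<epsilon> x + \<Theta> p \<epsilon> x) ** (mat 1 + \<Psi> x) - (mat 1 + \<Psi> x) ** M p \<epsilon> x))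
            (at x within {..0})))"
  proof (intro ballI allI impI)
    fix p \<epsilon> assume p: "p \<in> Par" and H: "0 < \<epsilon> \<and> \<epsilon> < e0 \<and> \<delta> p \<epsilon> \<le> \<theta>/4"
    then have ep: "\<epsilon> > 0" and ee: "\<epsilon> < e0" and dd: "\<delta> p \<epsilon> \<le> \<theta>/4" by auto
    have ea: "\<epsilon> \<le> \<theta>/(2*Aq)" and eb: "\<epsilon> \<le> \<theta>/(4*Aq*N*exp 1)" and ec: "\<epsilon> \<le> 1/(2*C1)"
      using ee unfolding e0_def by auto
    have e1: "2*((norm (mat 1 :: complex^'n^'n) * exp (C/\<theta>))^2*C)*\<epsilon>/\<theta> \<le> 1"
    proof -
      have "2*Aq*\<epsilon> \<le> \<theta>" using ea Aqp by (simp add: field_simps)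
      then show ?thesis using theta_pos unfolding Aq_def K0_def N_def by (simp add: field_simps)
    qed
    have e2: "2*((norm (mat 1 :: complex^'n^'n) * exp (C/\<theta>))^2*C)*\<epsilon>*norm (mat 1 :: complex^'n^'n)*exp 1/\<theta> \<le> 1/2"
    proof -
      have "4*Aq*N*exp 1*\<epsilon> \<le> \<theta>" using eb Aqp Np by (simp add: field_simps)
      then show ?thesis using theta_pos unfolding Aq_def K0_def N_def by (simp add: field_simps)
    qed
    obtain P where Pb: "\<And>x. x \<le> 0 \<Longrightarrow> norm (P x - mat 1) \<le> C1 * \<epsilon> * exp (\<theta>*\<epsilon>*x/2)"
      and Pd: "\<And>x. x \<le> 0 \<Longrightarrow> (P has_vector_derivative ((M p \<epsilon> x + \<Theta> p \<epsilon> x) ** P x - P x ** M p \<epsilon> x)) (at x within {..0})"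
      using core[OF C_pos theta_pos ep delta_nonneg[OF p ep] dd M_cont[OF p ep] Theta_cont[OF p ep]
          Theta_bound[OF p ep] ReM_bound[OF p ep] e1 e2]
      unfolding C1_def A2_def K0_def N_def by blast
    have bnd: "norm (P x - mat 1) \<le> C1 * \<epsilon> * exp (- \<theta> * \<epsilon> * \<bar>x\<bar> / 2)" if x: "x \<le> 0" for x
      using Pb[OF x] x by simp
    show "\<exists>\<Psi> :: real \<Rightarrow> complex^'n^'n.
        (\<forall>x \<le> 0. invertible (mat 1 + \<Psi> x)) \<and>
        (\<forall>x \<le> 0. norm (\<Psi> x) \<le> C1 * \<epsilon> * exp (- \<theta> * \<epsilon> * \<bar>x\<bar> / 2)) \<and>
        (\<forall>x \<le> 0. ((\<lambda>y. mat 1 + \<Psi> y) has_vector_derivative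
            ((M p \<epsilon> x + \<Theta> p \<epsilon> x) ** (mat 1 + \<Psi> x) - (mat 1 + \<Psi> x) ** M p \<epsilon> x))
            (at x within {..0}))"
    proof (intro exI[of _ "\<lambda>y. P y - mat 1"] conjI allI impI)
      fix x :: real assume x: "x \<le> 0"
      show "norm (P x - mat 1) \<le> C1 * \<epsilon> * exp (- \<theta> * \<epsilon> * \<bar>x\<bar> / 2)" by (rule bnd[OF x])
      have "exp (- \<theta> * \<epsilon> * \<bar>x\<bar> / 2) \<le> 1" using theta_pos ep by simp
      then have "C1 * \<epsilon> * exp (- \<theta> * \<epsilon> * \<bar>x\<bar> / 2) \<le> C1 * \<epsilon>"
        using C1p ep by (simp add: mult_left_le)
      also have "C1 * \<epsilon> \<le> 1/2" using ec C1p by (simp add: field_simps)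
      finally have "norm (P x - mat 1) < 1" using bnd[OF x] by simp
      then show "invertible (mat 1 + (P x - mat 1))" by (rule inv_small)
      show "((\<lambda>y. mat 1 + (P y - mat 1)) has_vector_derivative
            ((M p \<epsilon> x + \<Theta> p \<epsilon> x) ** (mat 1 + (P x - mat 1)) - (mat 1 + (P x - mat 1)) ** M p \<epsilon> x))
            (at x within {..0})"
        using Pd[OF x] by simp
    qed
  qed
  show ?thesis
    apply (rule exI[of _ "\<theta>/4"], rule conjI, rule d4)
    apply (rule exI[of _ e0], rule conjI, rule e0p)
    apply (rule exI[of _ C1], rule conjI, rule C1p)
    apply (rule main)
    done
qed


end
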